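(* There is a constant $c$ such that for every $\ell\in\mathbb N$ and every finite alphabet $\Gamma_2$ disjoint from $\Gamma_1=\{0,1,\mathsf{inc},\mathsf{dec}\}$, there are $\ell$ DFAs $B_1,\dots,B_\ell$ over $\Gamma_1\cup\Gamma_2$, each with at most $c\cdot\ell$ states, such that $L_\ell=\bigcap_{i=1}^{\ell}L(B_i)$.
   Context: For a word $b_1b_2\cdots b_\ell\in\{0,1\}^\ell$ let $\mathsf{val}(b_1\cdots b_\ell)=\sum_i b_i 2^{\ell-i}$. Interpret $\mathsf{inc}(n)=n+1$, $\mathsf{dec}(n)=n-1$ and $a(n)=n$ for $a\in\Gamma_2$. Then $L_\ell$ is the set of words $n_0o_1n_1o_2n_2\cdots o_kn_k$ with $k\ge 0$, each $n_i\in\{0,1\}^\ell$, each $o_i\in\{\mathsf{inc},\mathsf{dec}\}\cup\Gamma_2$, and $\mathsf{val}(n_i)\equiv o_i(\mathsf{val}(n_{i-1}))\pmod{2^\ell}$ for all $0<i\le k$. *)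

theory Defs
  imports Main
begin

text \<open>Symbols of the alphabet Gamma_1 \<union> Gamma_2: the four letters of Gamma_1 = {0,1,inc,dec}
  and the letters of Gamma_2, tagged by the constructor Oth (so the two parts are disjoint).\<close>
datatype 'a sym = Zero | One | Inc | Dec | Oth 'a

definition Sigma :: "'a set \<Rightarrow> 'a sym set" where
  "Sigma G2 = {Zero, One, Inc, Dec} \<union> Oth ` G2"

record 's dfa =
  init :: nat
  trans :: "nat \<Rightarrow> 's \<Rightarrow> nat"
  accept :: "nat set"
  Q :: "nat set"

definition wf_dfa :: "'s set \<Rightarrow> 's dfa \<Rightarrow> bool" where
  "wf_dfa S A \<longleftrightarrow> finite (Q A) \<and> init A \<in> Q A \<and> accept A \<subseteq> Q A \<and>
     (\<forall>q\<in>Q A. \<forall>s\<in>S. trans A q s \<in> Q A)"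

definition dfa_lang :: "'s set \<Rightarrow> 's dfa \<Rightarrow> 's list set" where
  "dfa_lang S A = {w. set w \<subseteq> S \<and> foldl (trans A) (init A) w \<in> accept A}"

definition val :: "bool list \<Rightarrow> int" where
  "val bs = foldl (\<lambda>acc b. 2 * acc + (if b then 1 else 0)) 0 bs"

definition bits :: "bool list \<Rightarrow> 'a sym list" where
  "bits bs = map (\<lambda>b. if b then One else Zero) bs"

fun opval :: "'a sym \<Rightarrow> int \<Rightarrow> int" where
  "opval Inc n = n + 1"
| "opval Dec n = n - 1"
| "opval _ n = n"

definition encode :: "bool list list \<Rightarrow> 'a sym list \<Rightarrow> 'a sym list" where
  "encode ns os = bits (ns ! 0) @ concat (map (\<lambda>i. os ! i # bits (ns ! (i + 1))) [0..<length os])"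

definition Lang :: "nat \<Rightarrow> 'a set \<Rightarrow> 'a sym list set" where
  "Lang l G2 = {encode ns os | ns os.
      length ns = length os + 1 \<and>
      (\<forall>n\<in>set ns. length n = l) \<and>
      (\<forall>x\<in>set os. x \<in> {Inc, Dec} \<union> Oth ` G2) \<and>
      (\<forall>i<length os. val (ns ! (i + 1)) mod 2 ^ l = opval (os ! i) (val (ns ! i)) mod 2 ^ l)}"

end

theory Submission
  imports Defs "HOL-Library.Countable"
begin


lemma val_snoc: "val (xs @ [b]) = 2 * val xs + (if b then 1 else 0)"
  by (simp add: val_def)

lemma val_nonneg: "0 \<le> val xs"
  by (induction xs rule: rev_induct) (auto simp: val_snoc val_def)

lemma val_bound: "val xs < 2 ^ length xs"
  by (induction xs rule: rev_induct) (auto simp: val_snoc val_def)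

lemma mod2key:
  fixes a b M :: int
  assumes "M > 0"
  shows "((2*a + (if x then 1 else 0)) mod (2*M) = (2*b + (if y then 1 else 0)) mod (2*M))
     \<longleftrightarrow> (x = y \<and> a mod M = b mod M)"
proof -
  have e: "(2*c + (if z then 1 else 0)) mod (2*M) = 2 * (c mod M) + (if z then 1 else 0)" for c :: int and z
  proof -
    have "(2*c + (if z then 1 else 0)) mod (2*M) = 2 * ((2*c + (if z then 1 else 0)) div 2 mod M) + (2*c + (if z then 1 else 0)) mod 2"
      using mod_mult2_eq'[of "2*c + (if z then 1 else 0)" 2 "nat M"] assms by simp
    then show ?thesis by auto
  qed
  have o: "2*p+1 \<noteq> 2*q" for p q :: int by presburger
  show ?thesis unfolding e using o by (cases x; cases y) (auto, metis)
qed

lemma all_less_Suc_iff: "(\<forall>k<Suc m. P k) \<longleftrightarrow> (\<forall>k<m. P k) \<and> P m"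
  using less_Suc_eq by auto

lemma nth_snoc_lt: "k < length xs \<Longrightarrow> (xs @ [b]) ! k = xs ! k"
  by (simp add: nth_append)

lemma all_snoc_lt: "k < length xs \<Longrightarrow>
  (\<forall>j. k < j \<and> j < Suc (length xs) \<longrightarrow> P ((xs @ [b]) ! j)) \<longleftrightarrow>
  (\<forall>j. k < j \<and> j < length xs \<longrightarrow> P (xs ! j)) \<and> P b"
  by (auto simp: nth_append)

lemma pow2Suc: "(2::int) ^ Suc m = 2 * 2 ^ m" by simp

lemma val_id: "length ys = length xs \<Longrightarrow>
  (val ys mod 2 ^ length xs = val xs mod 2 ^ length xs) \<longleftrightarrow> ys = xs"
proof (induction xs arbitrary: ys rule: rev_induct)
  case Nil then show ?case by simp
next
  case (snoc b xs)
  obtain ys' b' where ys: "ys = ys' @ [b']" using snoc.prems by (cases ys rule: rev_exhaust) auto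
  have l: "length ys' = length xs" using snoc.prems ys by simp
  show ?case unfolding ys using snoc.IH[OF l]
    by (simp only: length_append_singleton pow2Suc val_snoc mod2key[OF zero_less_power[of 2]]) auto
qed

lemma list_eq_nth: "length ys = length xs \<Longrightarrow> (\<forall>k<length xs. ys ! k = xs ! k) \<longleftrightarrow> ys = xs"
  by (metis nth_equalityI)

lemma val_inc: "length ys = length xs \<Longrightarrow>
  (val ys mod 2 ^ length xs = (val xs + 1) mod 2 ^ length xs) \<longleftrightarrow>
  (\<forall>k<length xs. ys ! k = (xs ! k \<noteq> (\<forall>j. k < j \<and> j < length xs \<longrightarrow> xs ! j)))"
proof (induction xs arbitrary: ys rule: rev_induct)
  case Nil then show ?case by simp
next
  case (snoc b xs)
  obtain ys' b' where ys: "ys = ys' @ [b']" using snoc.prems by (cases ys rule: rev_exhaust) auto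
  have l: "length ys' = length xs" using snoc.prems ys by simp
  have v: "val (xs @ [b]) + 1 = (if b then 2 * (val xs + 1) + (if False then 1 else 0) else 2 * val xs + (if True then 1 else 0))"
    by (simp add: val_snoc)
  have r: "(\<forall>k<length (xs @ [b]). (ys' @ [b']) ! k = ((xs @ [b]) ! k \<noteq> (\<forall>j. k < j \<and> j < length (xs @ [b]) \<longrightarrow> (xs @ [b]) ! j)))
     \<longleftrightarrow> (\<forall>k<length xs. ys' ! k = (xs ! k \<noteq> ((\<forall>j. k < j \<and> j < length xs \<longrightarrow> xs ! j) \<and> b))) \<and> b' = (\<not> b)"
  proof -
    have r1: "((ys'@[b'])!k = ((xs@[b])!k \<noteq> (\<forall>j. k<j \<and> j<Suc(length xs) \<longrightarrow> (xs@[b])!j))) \<longleftrightarrow> (ys'!k = (xs!k \<noteq> ((\<forall>j. k < j \<and> j < length xs \<longrightarrow> xs ! j) \<and> b)))"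
      if "k < length xs" for k
      using that l by (simp add: nth_snoc_lt all_snoc_lt[where P="\<lambda>x. x"])
    have r2: "((ys'@[b'])!length xs = ((xs@[b])!length xs \<noteq> (\<forall>j. length xs<j \<and> j<Suc(length xs) \<longrightarrow> (xs@[b])!j))) \<longleftrightarrow> b' = (\<not> b)"
      using l by (auto simp: nth_append)
    show ?thesis unfolding length_append_singleton all_less_Suc_iff using r1 r2 by auto
  qed
  show ?case
  proof (cases b)
    case True
    then show ?thesis unfolding ys r using snoc.IH[OF l]
      unfolding length_append_singleton pow2Suc v if_P[OF \<open>b\<close>] unfolding val_snoc by (simp only: mod2key[OF zero_less_power[of 2]]) auto
  next
    case False
    then show ?thesis unfolding ys r using val_id[OF l] list_eq_nth[OF l]
      unfolding length_append_singleton pow2Suc v if_not_P[OF \<open>\<not> b\<close>] unfolding val_snoc by (simp only: mod2key[OF zero_less_power[of 2]]) auto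
  qed
qed

lemma val_dec: "length ys = length xs \<Longrightarrow>
  (val ys mod 2 ^ length xs = (val xs - 1) mod 2 ^ length xs) \<longleftrightarrow>
  (\<forall>k<length xs. ys ! k = (xs ! k \<noteq> (\<forall>j. k < j \<and> j < length xs \<longrightarrow> \<not> xs ! j)))"
proof (induction xs arbitrary: ys rule: rev_induct)
  case Nil then show ?case by simp
next
  case (snoc b xs)
  obtain ys' b' where ys: "ys = ys' @ [b']" using snoc.prems by (cases ys rule: rev_exhaust) auto
  have l: "length ys' = length xs" using snoc.prems ys by simp
  have v: "val (xs @ [b]) - 1 = (if b then 2 * val xs + (if False then 1 else 0) else 2 * (val xs - 1) + (if True then 1 else 0))"
    by (simp add: val_snoc)
  have r: "(\<forall>k<length (xs @ [b]). (ys' @ [b']) ! k = ((xs @ [b]) ! k \<noteq> (\<forall>j. k < j \<and> j < length (xs @ [b]) \<longrightarrow> \<not> (xs @ [b]) ! j)))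
     \<longleftrightarrow> (\<forall>k<length xs. ys' ! k = (xs ! k \<noteq> ((\<forall>j. k < j \<and> j < length xs \<longrightarrow> \<not> xs ! j) \<and> \<not> b))) \<and> b' = (\<not> b)"
  proof -
    have r1: "((ys'@[b'])!k = ((xs@[b])!k \<noteq> (\<forall>j. k<j \<and> j<Suc(length xs) \<longrightarrow> \<not>(xs@[b])!j))) \<longleftrightarrow> (ys'!k = (xs!k \<noteq> ((\<forall>j. k < j \<and> j < length xs \<longrightarrow> \<not> xs ! j) \<and> \<not> b)))"
      if "k < length xs" for k
      using that l by (simp add: nth_snoc_lt all_snoc_lt[where P="Not"])
    have r2: "((ys'@[b'])!length xs = ((xs@[b])!length xs \<noteq> (\<forall>j. length xs<j \<and> j<Suc(length xs) \<longrightarrow> \<not>(xs@[b])!j))) \<longleftrightarrow> b' = (\<not> b)"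
      using l by (auto simp: nth_append)
    show ?thesis unfolding length_append_singleton all_less_Suc_iff using r1 r2 by auto
  qed
  show ?case
  proof (cases b)
    case False
    then show ?thesis unfolding ys r using snoc.IH[OF l]
      unfolding length_append_singleton pow2Suc v if_not_P[OF \<open>\<not> b\<close>] unfolding val_snoc by (simp only: mod2key[OF zero_less_power[of 2]]) auto
  next
    case True
    then show ?thesis unfolding ys r using val_id[OF l] list_eq_nth[OF l]
      unfolding length_append_singleton pow2Suc v if_P[OF \<open>b\<close>] unfolding val_snoc by (simp only: mod2key[OF zero_less_power[of 2]]) auto
  qed
qed



type_synonym st = "(nat \<times> bool option \<times> bool \<times> bool \<times> bool) option"

definition carry :: "'a sym \<Rightarrow> bool \<Rightarrow> bool \<Rightarrow> bool" where
  "carry x a1 a0 = (if x = Inc then a1 else if x = Dec then a0 else False)"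

definition bitcond :: "nat \<Rightarrow> bool list \<Rightarrow> 'a sym \<Rightarrow> bool list \<Rightarrow> bool" where
  "bitcond k n x n' \<longleftrightarrow> n' ! k = (n ! k \<noteq> carry x (\<forall>j. k < j \<and> j < length n \<longrightarrow> n ! j)
                                          (\<forall>j. k < j \<and> j < length n \<longrightarrow> \<not> n ! j))"

fun step :: "nat \<Rightarrow> nat \<Rightarrow> st \<Rightarrow> 'a sym \<Rightarrow> st" where
  "step l k None x = None"
| "step l k (Some (p,e,c,a1,a0)) x =
   (if x = Zero \<or> x = One then
      (if p < l then
         (if p = k then (if e = None \<or> e = Some (x = One) then Some (Suc p, e, x = One, True, True) else None)
          else if k < p then Some (Suc p, e, c, a1 \<and> x = One, a0 \<and> x \<noteq> One)
          else Some (Suc p, e, c, a1, a0))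
       else None)
    else (if p = l then Some (0, Some (c \<noteq> carry x a1 a0), False, False, False) else None))"

lemma foldl_None: "foldl (step l k) None w = None"
  by (induction w) auto

lemma bits_snoc: "bits (xs @ [b]) = bits xs @ [if b then One else Zero]"
  by (simp add: bits_def)

lemma length_bits[simp]: "length (bits xs) = length xs"
  by (simp add: bits_def)

lemma block: "length xs \<le> l \<Longrightarrow> k < l \<Longrightarrow> foldl (step l k) (Some (0,e,False,False,False)) (bits xs) =
 (if length xs \<le> k then Some (length xs, e, False, False, False)
  else if e = None \<or> e = Some (xs!k) then Some (length xs, e, xs!k, \<forall>j. k<j \<and> j<length xs \<longrightarrow> xs!j,
     \<forall>j. k<j \<and> j<length xs \<longrightarrow> \<not>xs!j) else None)"
proof (induction xs rule: rev_induct)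
  case Nil
  then show ?case by (simp add: bits_def)
next
  case (snoc b xs)
  have lxs: "length xs \<le> l" using snoc.prems by simp
  note IH = snoc.IH[OF lxs snoc.prems(2)]
  have lt: "length xs < l" using snoc.prems by simp
  consider "length xs < k" | "length xs = k" | "k < length xs" by linarith
  then show ?case
  proof cases
    case 1
    then show ?thesis using lt by (simp add: bits_snoc IH)
  next
    case 2
    then show ?thesis using lt by (auto simp add: bits_snoc IH nth_append)
  next
    case 3
    show ?thesis
    proof (cases "e = None \<or> e = Some (xs!k)")
      case True
      then show ?thesis using 3 lt
        by (auto simp add: bits_snoc IH nth_snoc_lt all_snoc_lt[where P="\<lambda>x. x"] all_snoc_lt[where P="Not"])
    next
      case False
      then have "foldl (step l k) (Some (0,e,False,False,False)) (bits xs :: 'a sym list) = None"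
        using 3 IH by (cases e) auto
      then show ?thesis using 3 lt False by (simp add: bits_snoc nth_snoc_lt foldl_None)
    qed
  qed
qed

lemma prefix: "length w \<le> l \<Longrightarrow> foldl (step l k) (Some(0,e,c,a1,a0)) w = None \<or>
  ((\<exists>e' c' a1' a0'. foldl (step l k) (Some(0,e,c,a1,a0)) w = Some (length w, e', c', a1', a0')) \<and> set w \<subseteq> {Zero, One})"
proof (induction w rule: rev_induct)
  case Nil
  then show ?case by simp
next
  case (snoc x w)
  then have lt: "length w < l" by simp
  from snoc lt consider "foldl (step l k) (Some(0,e,c,a1,a0)) w = None"
    | e' c' a1' a0' where "foldl (step l k) (Some(0,e,c,a1,a0)) w = Some (length w, e', c', a1', a0')" "set w \<subseteq> {Zero, One}"
    by fastforce
  then show ?case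
  proof cases
    case 1 then show ?thesis by simp
  next
    case 2 then show ?thesis using lt by auto
  qed
qed

lemma bits_map: "set u \<subseteq> {Zero, One} \<Longrightarrow> bits (map (\<lambda>x. x = One) u) = u"
  by (induction u) (auto simp: bits_def)

lemma encode_single: "encode [n] [] = bits n"
  by (simp add: encode_def)

lemma encode_cons: "encode (n # ns) (x # os) = bits n @ x # encode ns os"
proof -
  have "[0..<Suc (length os)] = 0 # map Suc [0..<length os]"
    by (simp add: upt_conv_Cons map_Suc_upt del: upt_Suc)
  then show ?thesis by (simp add: encode_def o_def del: upt_Suc)
qed

definition acc :: "nat \<Rightarrow> st \<Rightarrow> bool" where
  "acc l s \<longleftrightarrow> (\<exists>e c a1 a0. s = Some (l,e,c,a1,a0))"

definition P :: "nat \<Rightarrow> nat \<Rightarrow> bool option \<Rightarrow> 'a sym list \<Rightarrow> bool" where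
  "P l k e w \<longleftrightarrow> (\<exists>ns os. w = encode ns os \<and> length ns = length os + 1 \<and> (\<forall>n\<in>set ns. length n = l) \<and>
      (\<forall>x\<in>set os. x \<noteq> Zero \<and> x \<noteq> One) \<and> (e = None \<or> e = Some (ns!0!k)) \<and>
      (\<forall>i<length os. bitcond k (ns!i) (os!i) (ns!(Suc i))))"

lemma char_if: "k < l \<Longrightarrow> length ns = length os + 1 \<Longrightarrow> \<forall>n\<in>set ns. length n = l \<Longrightarrow>
      \<forall>x\<in>set os. x \<noteq> Zero \<and> x \<noteq> One \<Longrightarrow> e = None \<or> e = Some (ns!0!k) \<Longrightarrow>
      \<forall>i<length os. bitcond k (ns!i) (os!i) (ns!(Suc i)) \<Longrightarrow>
      acc l (foldl (step l k) (Some (0,e,False,False,False)) (encode ns os))"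
proof (induction os arbitrary: ns e)
  case Nil
  then obtain n where ns: "ns = [n]" by (cases ns) auto
  then show ?case using Nil block[of n l k e] by (auto simp: encode_single acc_def)
next
  case (Cons x os)
  then obtain n ns' where ns: "ns = n # ns'" by (cases ns) auto
  have ln: "length n = l" using Cons.prems ns by simp
  define e' where "e' = (n!k \<noteq> carry x (\<forall>j. k<j \<and> j<length n \<longrightarrow> n!j) (\<forall>j. k<j \<and> j<length n \<longrightarrow> \<not>n!j))"
  have b: "foldl (step l k) (Some (0,e,False,False,False)) (bits n) = Some (l, e, n!k, \<forall>j. k<j \<and> j<length n \<longrightarrow> n!j, \<forall>j. k<j \<and> j<length n \<longrightarrow> \<not>n!j)"
    using block[of n l k e] ln Cons.prems ns by auto
  have s: "step l k (Some (l, e, n!k, \<forall>j. k<j \<and> j<length n \<longrightarrow> n!j, \<forall>j. k<j \<and> j<length n \<longrightarrow> \<not>n!j)) x = Some (0, Some e', False, False, False)"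
    using Cons.prems by (simp add: e'_def)
  have bc0: "bitcond k n x (ns'!0)" using Cons.prems(6) ns by auto
  have "acc l (foldl (step l k) (Some (0,Some e',False,False,False)) (encode ns' os))"
    apply (rule Cons.IH)
    using Cons.prems ns bc0 by (auto simp: e'_def bitcond_def)
  then show ?case unfolding ns encode_cons foldl_append foldl_Cons b s .
qed

lemma char_only_if: "k < l \<Longrightarrow> acc l (foldl (step l k) (Some (0,e,False,False,False)) w) \<Longrightarrow> P l k e w"
proof (induction "length w" arbitrary: w e rule: less_induct)
  case less
  note acc = less.prems(2)
  have "l \<le> length w"
  proof (rule ccontr)
    assume "\<not> l \<le> length w"
    then show False using prefix[of w l k e False False False] acc by (auto simp: acc_def)
  qed
  define u where "u = take l w"
  define r where "r = drop l w"
  have w: "w = u @ r" by (simp add: u_def r_def)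
  have lu: "length u = l" using \<open>l \<le> length w\<close> by (simp add: u_def)
  have pu: "foldl (step l k) (Some (0,e,False,False,False)) u \<noteq> None"
  proof
    assume "foldl (step l k) (Some (0,e,False,False,False)) u = None"
    then show False using acc w by (simp add: foldl_None acc_def)
  qed
  then have "set u \<subseteq> {Zero, One}" using prefix[of u l k e False False False] lu by auto
  define n where "n = map (\<lambda>x. x = One) u"
  have un: "u = bits n" using bits_map[OF \<open>set u \<subseteq> {Zero, One}\<close>] by (simp add: n_def)
  have ln: "length n = l" using lu by (simp add: n_def)
  have eok: "e = None \<or> e = Some (n!k)"
  proof (rule ccontr)
    assume "\<not> (e = None \<or> e = Some (n!k))"
    then have "foldl (step l k) (Some (0,e,False,False,False)) u = None"
      using block[of n l k e] ln less.prems(1) un by (cases e) auto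
    with pu show False by simp
  qed
  have b: "foldl (step l k) (Some (0,e,False,False,False)) u = Some (l, e, n!k, \<forall>j. k<j \<and> j<length n \<longrightarrow> n!j, \<forall>j. k<j \<and> j<length n \<longrightarrow> \<not>n!j)"
    using block[of n l k e] ln less.prems(1) un eok by auto
  show ?case
  proof (cases r)
    case Nil
    then show ?thesis unfolding P_def
      by (intro exI[of _ "[n]"] exI[of _ "[]"]) (use w un ln eok in \<open>auto simp: encode_single\<close>)
  next
    case (Cons x r')
    have xnb: "x \<noteq> Zero \<and> x \<noteq> One"
    proof (rule ccontr)
      assume "\<not> (x \<noteq> Zero \<and> x \<noteq> One)"
      then show False using acc w b Cons by (auto simp: foldl_None acc_def)
    qed
    define e' where "e' = (n!k \<noteq> carry x (\<forall>j. k<j \<and> j<length n \<longrightarrow> n!j) (\<forall>j. k<j \<and> j<length n \<longrightarrow> \<not>n!j))"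
    have "acc l (foldl (step l k) (Some (0,Some e',False,False,False)) r')"
      using acc w b Cons xnb by (simp add: e'_def)
    moreover have "length r' < length w" using w Cons by simp
    ultimately have "P l k (Some e') r'" using less.hyps less.prems(1) by blast
    then obtain ns os where H: "r' = encode ns os" "length ns = length os + 1" "\<forall>n\<in>set ns. length n = l"
      "\<forall>x\<in>set os. x \<noteq> Zero \<and> x \<noteq> One" "Some e' = Some (ns!0!k)"
      "\<forall>i<length os. bitcond k (ns!i) (os!i) (ns!(Suc i))" unfolding P_def by blast
    show ?thesis unfolding P_def
    proof (intro exI[of _ "n # ns"] exI[of _ "x # os"] conjI)
      show "w = encode (n # ns) (x # os)" using w un Cons H by (simp add: encode_cons)
      show "\<forall>i<length (x # os). bitcond k ((n # ns) ! i) ((x # os) ! i) ((n # ns) ! Suc i)"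
      proof (intro allI impI)
        fix i assume "i < length (x # os)"
        then show "bitcond k ((n # ns) ! i) ((x # os) ! i) ((n # ns) ! Suc i)"
          using H e'_def by (cases i) (auto simp: bitcond_def)
      qed
    qed (use H ln xnb eok in auto)
  qed
qed



lemma bits_inj: "bits n = bits n' \<Longrightarrow> n = n'"
proof (induction n arbitrary: n')
  case Nil then show ?case by (simp add: bits_def)
next
  case (Cons b n) then show ?case by (cases n') (auto simp: bits_def split: if_splits)
qed

lemma encode_unique: "length ns = length os + 1 \<Longrightarrow> length ns' = length os' + 1 \<Longrightarrow>
  \<forall>n\<in>set ns. length n = l \<Longrightarrow> \<forall>n\<in>set ns'. length n = l \<Longrightarrow>
  \<forall>x\<in>set os. x \<noteq> Zero \<and> x \<noteq> One \<Longrightarrow> \<forall>x\<in>set os'. x \<noteq> Zero \<and> x \<noteq> One \<Longrightarrow>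
  encode ns os = encode ns' os' \<Longrightarrow> ns = ns' \<and> os = os'"
proof (induction os arbitrary: ns ns' os')
  case Nil
  then obtain n where ns: "ns = [n]" by (cases ns) auto
  show ?case
  proof (cases os')
    case Nil
    then obtain n' where "ns' = [n']" using Nil.prems by (cases ns') auto
    then show ?thesis using Nil ns Nil.prems bits_inj by (auto simp: encode_single)
  next
    case (Cons x' os'')
    then obtain n' ns'' where "ns' = n' # ns''" using Nil.prems by (cases ns') auto
    then have "length (encode ns' os') > l" using Cons Nil.prems(4) by (simp add: encode_cons)
    moreover have "length (encode ns ([] :: 'a sym list)) = l" using ns Nil.prems(3) by (simp add: encode_single)
    moreover have "length (encode ns ([] :: 'a sym list)) = length (encode ns' os')" using Nil.prems(7) by (rule arg_cong)
    ultimately show ?thesis by linarith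
  qed
next
  case (Cons x os)
  then obtain n ns1 where ns: "ns = n # ns1" by (cases ns) auto
  show ?case
  proof (cases os')
    case Nil
    then obtain n' where ns': "ns' = [n']" using Cons.prems by (cases ns') auto
    have "length (encode ns (x # os)) > l" using ns Cons.prems(3) by (simp add: encode_cons)
    moreover have "length (encode ns' os') = l" using ns' Nil Cons.prems(4) by (simp add: encode_single)
    moreover have "length (encode ns (x # os)) = length (encode ns' os')" using Cons.prems(7) by simp
    ultimately show ?thesis by linarith
  next
    case (Cons x' os'')
    then obtain n' ns'' where ns': "ns' = n' # ns''" using Cons.prems by (cases ns') auto
    have "bits n @ x # encode ns1 os = bits n' @ x' # encode ns'' os''"
      using Cons.prems(7) ns ns' Cons by (simp add: encode_cons)
    moreover have "length (bits n) = length (bits n')" using Cons.prems ns ns' by simp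
    ultimately have e: "n = n'" "x = x'" "encode ns1 os = encode ns'' os''"
      using bits_inj by (auto simp: append_eq_append_conv)
    have "ns1 = ns'' \<and> os = os''"
      using Cons.IH[of ns1 ns'' os''] Cons.prems ns ns' \<open>os' = x' # os''\<close> e(3) by auto
    then show ?thesis using e ns ns' \<open>os' = x' # os''\<close> by simp
  qed
qed

lemma set_bits: "set (bits n) \<subseteq> {Zero, One}"
  by (auto simp: bits_def)

lemma set_encode: "length ns = length os + 1 \<Longrightarrow>
  set (encode ns os) \<subseteq> {Zero, One} \<union> set os \<and> set os \<subseteq> set (encode ns os)"
proof (induction os arbitrary: ns)
  case Nil
  then obtain n where ns: "ns = [n]" by (cases ns) auto
  then show ?case using set_bits by (simp add: encode_single)
next
  case (Cons x os)
  then obtain n ns1 where ns: "ns = n # ns1" by (cases ns) auto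
  then show ?case using Cons set_bits[of n] by (auto simp: encode_cons)
qed

lemma arith: "length n = l \<Longrightarrow> length n' = l \<Longrightarrow> x \<noteq> Zero \<Longrightarrow> x \<noteq> One \<Longrightarrow>
  (\<forall>k<l. bitcond k n x n') \<longleftrightarrow> val n' mod 2 ^ l = opval x (val n) mod 2 ^ l"
proof (cases x)
  case Inc
  assume "length n = l" "length n' = l"
  then show ?thesis using Inc val_inc[of n' n] by (simp add: bitcond_def carry_def)
next
  case Dec
  assume "length n = l" "length n' = l"
  then show ?thesis using Dec val_dec[of n' n] by (simp add: bitcond_def carry_def)
next
  case (Oth g)
  assume "length n = l" "length n' = l"
  then show ?thesis using Oth val_id[of n' n] list_eq_nth[of n' n] by (simp add: bitcond_def carry_def)
qed auto

definition D :: "nat \<Rightarrow> st set" where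
  "D l = insert None (Some ` ({0..l} \<times> (UNIV :: (bool option \<times> bool \<times> bool \<times> bool) set)))"

lemma card_D: "card (D l) \<le> 1 + (l + 1) * 24"
proof -
  have o: "(UNIV::bool option set) = {None, Some True, Some False}"
  proof -
    have "x \<in> {None, Some True, Some False}" for x :: "bool option" by (cases x) auto
    then show ?thesis by blast
  qed
  have c: "card (UNIV :: (bool option \<times> bool \<times> bool \<times> bool) set) = 24"
    unfolding UNIV_Times_UNIV[symmetric] card_cartesian_product o by (simp add: card_UNIV_bool)
  have "card (D l) \<le> Suc (card (Some ` ({0..l} \<times> (UNIV :: (bool option \<times> bool \<times> bool \<times> bool) set))))"
    unfolding D_def by (rule card_insert_le_m1) (auto)
  also have "\<dots> \<le> Suc (card ({0..l} \<times> (UNIV :: (bool option \<times> bool \<times> bool \<times> bool) set)))"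
    using card_image_le by (simp add: card_image)
  also have "\<dots> = 1 + (l + 1) * 24" by (simp add: card_cartesian_product c)
  finally show ?thesis .
qed



definition mk :: "nat \<Rightarrow> nat \<Rightarrow> 'a sym dfa" where
  "mk l k = \<lparr>init = to_nat (Some (0, None, False, False, False) :: st),
     trans = (\<lambda>q x. to_nat (step l k (from_nat q :: st) x)),
     accept = to_nat ` Collect (acc l), Q = to_nat ` D l\<rparr>"

lemma mk_fold: "foldl (trans (mk l k)) (to_nat s) w = to_nat (foldl (step l k) s w)"
  by (induction w arbitrary: s) (simp_all add: mk_def)

lemma D_None[simp]: "None \<in> D l" by (simp add: D_def)

lemma D_Some[simp]: "Some (p, r) \<in> D l \<longleftrightarrow> p \<le> l"
  by (auto simp: D_def)

lemma step_D: "x \<in> D l \<Longrightarrow> step l k x s \<in> D l"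
proof (cases x)
  case None then show ?thesis by simp
next
  case (Some t)
  obtain p e c a1 a0 where t: "t = (p, e, c, a1, a0)" by (cases t) auto
  assume "x \<in> D l"
  then have "p \<le> l" using Some t by simp
  then show ?thesis using Some t by (simp add: Let_def)
qed

lemma acc_D: "acc l s \<Longrightarrow> s \<in> D l"
  by (auto simp: acc_def D_def)

lemma finite_D: "finite (D l)"
  by (simp add: D_def)

lemma wf_mk: "wf_dfa S (mk l k)"
  unfolding wf_dfa_def
proof (intro conjI ballI)
  show "finite (Q (mk l k))" by (simp add: mk_def finite_D)
  show "init (mk l k) \<in> Q (mk l k)" by (simp add: mk_def D_def)
  show "accept (mk l k) \<subseteq> Q (mk l k)" using acc_D by (auto simp: mk_def)
  fix q s assume "q \<in> Q (mk l k)"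
  then obtain x where "x \<in> D l" "q = to_nat x" by (auto simp: mk_def)
  then show "trans (mk l k) q s \<in> Q (mk l k)" by (auto simp: mk_def intro!: imageI step_D)
qed

lemma card_mk: "1 \<le> l \<Longrightarrow> card (Q (mk l k)) \<le> 49 * l"
proof -
  assume "1 \<le> l"
  have "card (Q (mk l k)) \<le> card (D l)" by (simp add: mk_def card_image_le finite_D)
  also have "\<dots> \<le> 1 + (l + 1) * 24" by (rule card_D)
  also have "\<dots> \<le> 49 * l" using \<open>1 \<le> l\<close> by simp
  finally show ?thesis .
qed

lemma init_mk: "init (mk l k) = to_nat (Some (0, None, False, False, False) :: st)"
  by (simp add: mk_def)

lemma accept_mk: "accept (mk l k) = to_nat ` Collect (acc l)"
  by (simp add: mk_def)

lemma lang_mk: "dfa_lang S (mk l k) = {w. set w \<subseteq> S \<and> acc l (foldl (step l k) (Some (0, None, False, False, False)) w)}"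
  by (simp add: dfa_lang_def init_mk mk_fold accept_mk inj_image_mem_iff)

lemma P_unique: "P l k None w \<Longrightarrow> w = encode ns os \<Longrightarrow> length ns = length os + 1 \<Longrightarrow>
  \<forall>n\<in>set ns. length n = l \<Longrightarrow> \<forall>x\<in>set os. x \<noteq> Zero \<and> x \<noteq> One \<Longrightarrow>
  \<forall>i<length os. bitcond k (ns!i) (os!i) (ns!(Suc i))"
proof -
  assume "P l k None w" and a: "w = encode ns os" "length ns = length os + 1"
    "\<forall>n\<in>set ns. length n = l" "\<forall>x\<in>set os. x \<noteq> Zero \<and> x \<noteq> One"
  then obtain ns' os' where b: "w = encode ns' os'" "length ns' = length os' + 1"
    "\<forall>n\<in>set ns'. length n = l" "\<forall>x\<in>set os'. x \<noteq> Zero \<and> x \<noteq> One"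
    "\<forall>i<length os'. bitcond k (ns'!i) (os'!i) (ns'!(Suc i))" unfolding P_def by blast
  have "ns' = ns \<and> os' = os"
    by (rule encode_unique[OF b(2) a(2) b(3) a(3) b(4) a(4)]) (use a b in simp)
  then show ?thesis using b(5) by simp
qed

theorem claim4p7:
  shows "\<exists>c::nat. \<forall>l::nat. l \<ge> 1 \<longrightarrow> (\<forall>G2 :: 'a set. finite G2 \<longrightarrow>
     (\<exists>B :: nat \<Rightarrow> 'a sym dfa.
        (\<forall>i\<in>{1..l}. wf_dfa (Sigma G2) (B i) \<and> card (Q (B i)) \<le> c * l) \<and>
        Lang l G2 = (\<Inter>i\<in>{1..l}. dfa_lang (Sigma G2) (B i))))"
proof (intro exI[of _ 49] allI impI)
  fix l :: nat and G2 :: "'a set"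
  assume l: "1 \<le> l" and "finite G2"
  let ?B = "\<lambda>i. mk l (i - 1) :: 'a sym dfa"
  show "\<exists>B :: nat \<Rightarrow> 'a sym dfa.
        (\<forall>i\<in>{1..l}. wf_dfa (Sigma G2) (B i) \<and> card (Q (B i)) \<le> 49 * l) \<and>
        Lang l G2 = (\<Inter>i\<in>{1..l}. dfa_lang (Sigma G2) (B i))"
  proof (intro exI[of _ ?B] conjI ballI)
    fix i assume "i \<in> {1..l}"
    show "wf_dfa (Sigma G2) (?B i)" by (rule wf_mk)
    show "card (Q (?B i)) \<le> 49 * l" using card_mk[OF l] .
  next
    show "Lang l G2 = (\<Inter>i\<in>{1..l}. dfa_lang (Sigma G2) (?B i))"
    proof
      show "Lang l G2 \<subseteq> (\<Inter>i\<in>{1..l}. dfa_lang (Sigma G2) (?B i))"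
      proof
        fix w assume "w \<in> Lang l G2"
        then obtain ns os where H: "w = encode ns os" "length ns = length os + 1"
          "\<forall>n\<in>set ns. length n = l" "\<forall>x\<in>set os. x \<in> {Inc, Dec} \<union> Oth ` G2"
          "\<forall>i<length os. val (ns ! (i + 1)) mod 2 ^ l = opval (os ! i) (val (ns ! i)) mod 2 ^ l"
          unfolding Lang_def by blast
        have nb: "\<forall>x\<in>set os. x \<noteq> Zero \<and> x \<noteq> One" using H(4) by auto
        have sw: "set w \<subseteq> Sigma G2" using set_encode[OF H(2)] H(1,4) by (auto simp: Sigma_def)
        have bc: "\<forall>k<l. bitcond k (ns!i) (os!i) (ns!(Suc i))" if "i < length os" for i
        proof -
          have "length (ns!i) = l" "length (ns!Suc i) = l" using H(2,3) that by auto
          moreover have "os!i \<noteq> Zero" "os!i \<noteq> One" using nb that by auto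
          ultimately show ?thesis using arith[of "ns!i" l "ns!Suc i" "os!i"] H(5) that by simp
        qed
        show "w \<in> (\<Inter>i\<in>{1..l}. dfa_lang (Sigma G2) (?B i))"
        proof
          fix i assume i: "i \<in> {1..l}"
          have "acc l (foldl (step l (i - 1)) (Some (0, None, False, False, False)) w)"
            unfolding H(1) by (rule char_if) (use i H nb bc in auto)
          then show "w \<in> dfa_lang (Sigma G2) (?B i)" using sw by (simp add: lang_mk)
        qed
      qed
    next
      show "(\<Inter>i\<in>{1..l}. dfa_lang (Sigma G2) (?B i)) \<subseteq> Lang l G2"
      proof
        fix w assume w: "w \<in> (\<Inter>i\<in>{1..l}. dfa_lang (Sigma G2) (?B i))"
        have Pk: "P l k None w" if "k < l" for k
        proof -
          have "Suc k \<in> {1..l}" using that by auto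
          then have "w \<in> dfa_lang (Sigma G2) (?B (Suc k))" using w by blast
          then have "acc l (foldl (step l k) (Some (0, None, False, False, False)) w)"
            by (simp add: lang_mk)
          then show ?thesis using char_only_if that by blast
        qed
        have sw: "set w \<subseteq> Sigma G2" using w l by (auto simp: lang_mk)
        obtain ns os where H: "w = encode ns os" "length ns = length os + 1" "\<forall>n\<in>set ns. length n = l"
          "\<forall>x\<in>set os. x \<noteq> Zero \<and> x \<noteq> One"
          using Pk[of 0] l unfolding P_def by auto
        have ops: "\<forall>x\<in>set os. x \<in> {Inc, Dec} \<union> Oth ` G2"
          using set_encode[OF H(2)] H(1,4) sw by (auto simp: Sigma_def)
        have cong: "val (ns ! (i + 1)) mod 2 ^ l = opval (os ! i) (val (ns ! i)) mod 2 ^ l"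
          if "i < length os" for i
        proof -
          have "\<forall>k<l. bitcond k (ns!i) (os!i) (ns!(Suc i))"
          proof (intro allI impI)
            fix k assume "k < l"
            show "bitcond k (ns!i) (os!i) (ns!(Suc i))"
              using P_unique[OF Pk[OF \<open>k < l\<close>] H(1) H(2) H(3) H(4)] that by blast
          qed
          moreover have "length (ns!i) = l" "length (ns!Suc i) = l" using H(2,3) that by auto
          moreover have "os!i \<noteq> Zero" "os!i \<noteq> One" using H(4) that by auto
          ultimately show ?thesis using arith[of "ns!i" l "ns!Suc i" "os!i"] by simp
        qed
        show "w \<in> Lang l G2" unfolding Lang_def using H ops cong by blast
      qed
    qed
  qed
qed


end
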